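(* Let $H$ be a Hilbert space, $\theta\in(0,\pi)$, and let $f:\Sigma_\theta\to H$ be a bounded analytic function. Suppose that for some $0<\eta<\theta$ the functions $t\mapsto f(e^{\pm i\eta}t)$ belong to $L^2(\mathbb{R}_+,\frac{dt}{t};H)$. Then $\sum_{n\in\mathbb Z}\|f(2^n)\|_H^2<\infty$.
   Context: $\Sigma_\theta=\{z\in\mathbb C\setminus\{0\}:|\arg z|<\theta\}$. *)

theory Defs
  imports "HOL-Analysis.Analysis"
begin

definition sector :: "real \<Rightarrow> complex set" where
  "sector \<theta> = {z. z \<noteq> 0 \<and> \<bar>Arg z\<bar> < \<theta>}"

text \<open>A complex Hilbert space is modelled as a real Hilbert space (type class
  real_inner + complete_space) together with a complex structure J (multiplication
  by i): J is real-linear, J o J = -id, and J preserves the real inner product.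
  The complex inner product is then  inner x y + i * inner (J x) y.\<close>
definition complex_structure :: "('a::real_inner \<Rightarrow> 'a) \<Rightarrow> bool" where
  "complex_structure J \<longleftrightarrow> linear J \<and> (\<forall>x. J (J x) = - x) \<and>
     (\<forall>x y. inner (J x) (J y) = inner x y)"

definition cscale :: "('a::real_vector \<Rightarrow> 'a) \<Rightarrow> complex \<Rightarrow> 'a \<Rightarrow> 'a" where
  "cscale J c x = Re c *\<^sub>R x + Im c *\<^sub>R J x"

definition holomorphic_wrt ::
  "('a::real_normed_vector \<Rightarrow> 'a) \<Rightarrow> (complex \<Rightarrow> 'a) \<Rightarrow> complex set \<Rightarrow> bool" where
  "holomorphic_wrt J f S \<longleftrightarrow>
     (\<forall>z\<in>S. \<exists>v. (f has_derivative (\<lambda>h. cscale J h v)) (at z))"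

end

theory Submission
  imports Defs "HOL-Complex_Analysis.Complex_Analysis"
begin

lemma cs_norm:
  assumes J: "complex_structure J" shows "norm (J y) = norm y"
proof -
  have "inner (J y) (J y) = inner y y" using J unfolding complex_structure_def by blast
  then show ?thesis by (simp add: norm_eq_sqrt_inner)
qed

lemma cs_orth:
  assumes J: "complex_structure J" shows "inner (J y) y = 0"
proof -
  have "inner (J y) y = inner (J (J y)) (J y)" using J unfolding complex_structure_def by metis
  also have "\<dots> = - inner (J y) y" using J unfolding complex_structure_def by (simp add: inner_commute)
  finally show ?thesis by simp
qed

lemma gv_bound:
  assumes J: "complex_structure J" and v: "norm v = 1"
  shows "norm (Complex (inner y v) (- inner (J y) v)) \<le> 2 * norm y"
proof -
  have "norm (Complex (inner y v) (- inner (J y) v)) \<le> \<bar>inner y v\<bar> + \<bar>inner (J y) v\<bar>"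
    using cmod_le[of "Complex (inner y v) (- inner (J y) v)"] by simp
  also have "\<dots> \<le> norm y + norm (J y)"
    using Cauchy_Schwarz_ineq2[of y v] Cauchy_Schwarz_ineq2[of "J y" v] v by simp
  finally show ?thesis using cs_norm[OF J] by simp
qed

lemma gv_at:
  assumes J: "complex_structure J" and y: "y \<noteq> 0"
  shows "Complex (inner y (y /\<^sub>R norm y)) (- inner (J y) (y /\<^sub>R norm y)) = of_real (norm y)"
  using cs_orth[OF J, of y] y
  by (simp add: complex_eq_iff inner_commute power2_norm_eq_inner[symmetric] power2_eq_square)

lemma gv_deriv:
  assumes J: "complex_structure J"
    and d: "(f has_derivative (\<lambda>h. cscale J h w)) (at z)"
  shows "((\<lambda>z. Complex (inner (f z) v) (- inner (J (f z)) v)) has_field_derivative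
            Complex (inner w v) (- inner (J w) v)) (at z)"
proof -
  have lin: "linear J" using J unfolding complex_structure_def by blast
  have JJ: "\<And>x. J (J x) = - x" using J unfolding complex_structure_def by blast
  have bl: "bounded_linear J"
    by (rule bounded_linear_intro[where K=1]) (use lin cs_norm[OF J] in \<open>auto simp: linear_add linear_scale\<close>)
  have d1: "((\<lambda>z. inner (f z) v) has_derivative (\<lambda>h. inner (cscale J h w) v)) (at z)"
    using has_derivative_inner_left[OF d] .
  have d2: "((\<lambda>z. J (f z)) has_derivative (\<lambda>h. J (cscale J h w))) (at z)"
    using bounded_linear.has_derivative[OF bl d] .
  have d3: "((\<lambda>z. inner (J (f z)) v) has_derivative (\<lambda>h. inner (J (cscale J h w)) v)) (at z)"
    using has_derivative_inner_left[OF d2] .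
  have d4: "((\<lambda>z. of_real (inner (f z) v) + \<i> * of_real (- inner (J (f z)) v)) has_derivative
      (\<lambda>h. of_real (inner (cscale J h w) v) + \<i> * of_real (- inner (J (cscale J h w)) v))) (at z)"
    using d1 d3 d d2 by (auto intro!: derivative_eq_intros)
  have e: "(\<lambda>h. of_real (inner (cscale J h w) v) + \<i> * of_real (- inner (J (cscale J h w)) v))
      = (\<lambda>h. h * Complex (inner w v) (- inner (J w) v))"
  proof
    fix h
    have jc: "J (cscale J h w) = Re h *\<^sub>R J w - Im h *\<^sub>R w"
      unfolding cscale_def using lin JJ by (simp add: linear_add linear_scale)
    show "of_real (inner (cscale J h w) v) + \<i> * of_real (- inner (J (cscale J h w)) v)
       = h * Complex (inner w v) (- inner (J w) v)"
      unfolding jc by (simp add: cscale_def complex_eq_iff inner_add_left inner_diff_left algebra_simps)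
  qed
  have f: "(\<lambda>z. Complex (inner (f z) v) (- inner (J (f z)) v)) =
        (\<lambda>z. of_real (inner (f z) v) + \<i> * of_real (- inner (J (f z)) v))"
    by (simp add: fun_eq_iff complex_eq_iff)
  have m: "(\<lambda>h. h * Complex (inner w v) (- inner (J w) v)) = (*) (Complex (inner w v) (- inner (J w) v))"
    by (simp add: fun_eq_iff mult.commute)
  show ?thesis unfolding has_field_derivative_def f using d4 unfolding e m .
qed

lemma horiz:
  assumes pq: "p < q" and cF: "continuous_on (closed_segment (Complex p y) (Complex q y)) F"
    and phi: "\<phi> integrable_on {p..q}"
    and le: "\<And>t. t \<in> {p..q} \<Longrightarrow> norm (F (Complex t y)) \<le> \<phi> t"
  shows "norm (contour_integral (linepath (Complex p y) (Complex q y)) F) \<le> integral {p..q} \<phi>"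
proof -
  define G where "G = (\<lambda>z. F (z + \<i> * of_real y))"
  have lp: "linepath (Complex p y) (Complex q y) u = linepath (of_real p) (of_real q) u + \<i> * of_real y" for u
    by (simp add: linepath_def complex_eq_iff algebra_simps)
  have "contour_integral (linepath (Complex p y) (Complex q y)) F
      = contour_integral (linepath (of_real p) (of_real q)) G"
    unfolding contour_integral_integral G_def lp vector_derivative_linepath_at
    by (simp add: complex_eq_iff)
  also have "\<dots> = integral {p..q} (\<lambda>x. G (of_real x))"
    using pq by (subst contour_integral_linepath_Reals_eq) auto
  also have "\<dots> = integral {p..q} (\<lambda>x. F (Complex x y))"
    unfolding G_def by (simp add: Complex_eq)
  finally have eq: "contour_integral (linepath (Complex p y) (Complex q y)) F = integral {p..q} (\<lambda>x. F (Complex x y))" .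
  have "continuous_on {p..q} (\<lambda>x. F (Complex x y))"
  proof (rule continuous_on_compose2[OF cF])
    show "continuous_on {p..q} (\<lambda>x. Complex x y)"
      by (intro continuous_intros)
    show "(\<lambda>x. Complex x y) ` {p..q} \<subseteq> closed_segment (Complex p y) (Complex q y)"
      using pq by (auto simp: closed_segment_same_Im closed_segment_eq_real_ivl)
  qed
  then have "(\<lambda>x. F (Complex x y)) integrable_on {p..q}"
    by (rule integrable_continuous_interval)
  then show ?thesis unfolding eq
    by (rule integral_norm_bound_integral[OF _ phi le])
qed

lemma hbound:
  fixes a :: complex
  assumes y: "\<bar>y\<bar> = \<eta>" "0 < \<eta>" and a: "(norm a)^2 \<le> Pt"
  shows "norm (a^2 * exp (-((Complex t y - of_real x)^2)) / (Complex t y - of_real x))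
         \<le> exp(\<eta>^2)/\<eta> * (Pt * exp (-((t-x)^2)))"
proof -
  have d: "Complex t y - of_real x = Complex (t-x) y" by (simp add: complex_eq_iff)
  have yy: "y*y = \<eta>*\<eta>" using y by (metis abs_mult_self_eq)
  have e: "norm (exp (-((Complex t y - of_real x)^2))) = exp(\<eta>^2) * exp (-((t-x)^2))"
    unfolding d norm_exp_eq_Re using yy by (simp add: power2_eq_square exp_add[symmetric] algebra_simps)
  have n: "\<eta> \<le> norm (Complex t y - of_real x)"
    unfolding d using abs_Im_le_cmod[of "Complex (t-x) y"] y by simp
  have "norm (a^2 * exp (-((Complex t y - of_real x)^2)) / (Complex t y - of_real x))
      = (norm a)^2 * (exp(\<eta>^2) * exp (-((t-x)^2))) / norm (Complex t y - of_real x)"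
    by (simp only: norm_mult norm_divide norm_power e)
  also have "\<dots> \<le> Pt * (exp(\<eta>^2) * exp (-((t-x)^2))) / \<eta>"
  proof -
    have "0 \<le> Pt" using a by (meson order_trans zero_le_power2)
    then show ?thesis using y n a by (intro frac_le mult_right_mono) auto
  qed
  finally show ?thesis by (simp add: field_simps)
qed

lemma vbound:
  fixes a :: complex
  assumes w: "\<bar>Re w - x\<bar> = R" "0 < R" "\<bar>Im w\<bar> \<le> \<eta>" and a: "norm a \<le> B"
  shows "norm (a^2 * exp (-((w - of_real x)^2)) / (w - of_real x)) \<le> B^2 * exp(\<eta>^2) / R"
proof -
  have e: "norm (exp (-((w - of_real x)^2))) \<le> exp(\<eta>^2)"
  proof -
    have i: "(Im w)^2 \<le> \<eta>^2" using w(3) abs_le_square_iff[of "Im w" \<eta>] by auto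
    have s: "0 \<le> (Re w - x)^2" by simp
    have "Re (-((w - of_real x)^2)) = (Im w)^2 - (Re w - x)^2"
      by (simp add: power2_eq_square algebra_simps)
    also have "\<dots> \<le> \<eta>^2" using i s by linarith
    finally show ?thesis unfolding norm_exp_eq_Re by simp
  qed
  have n: "R \<le> norm (w - of_real x)"
    using abs_Re_le_cmod[of "w - of_real x"] w by simp
  have "norm (a^2 * exp (-((w - of_real x)^2)) / (w - of_real x))
      = (norm a)^2 * norm (exp (-((w - of_real x)^2))) / norm (w - of_real x)"
    by (simp add: norm_mult norm_divide norm_power)
  also have "\<dots> \<le> B^2 * exp(\<eta>^2) / R"
    using w n a e by (intro frac_le mult_mono power_mono) auto
  finally show ?thesis .
qed

lemma geo_fin: "finite K \<Longrightarrow> (\<Sum>k\<in>K. (1/2::real)^k) \<le> 2"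
proof -
  assume K: "finite K"
  have s: "summable (\<lambda>k. (1/2::real)^k)" by (rule summable_geometric) simp
  have "(\<Sum>k\<in>K. (1/2::real)^k) \<le> (\<Sum>k. (1/2::real)^k)"
    by (rule sum_le_suminf[OF s K]) simp
  also have "\<dots> = 2" using suminf_geometric[of "1/2::real"] by simp
  finally show ?thesis .
qed

lemma geo_int: "finite D \<Longrightarrow> (\<Sum>d\<in>D. (1/2::real)^nat \<bar>d\<bar>) \<le> 4"
proof -
  assume D: "finite D"
  define A where "A = D \<inter> {d. 0 \<le> d}"
  define B where "B = D \<inter> {d. d < 0}"
  have DAB: "D = A \<union> B" "A \<inter> B = {}" by (auto simp: A_def B_def)
  have fA: "finite A" "finite B" using D by (auto simp: A_def B_def)
  have injA: "inj_on (\<lambda>d. nat \<bar>d\<bar>) A" by (auto simp: A_def inj_on_def)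
  have injB: "inj_on (\<lambda>d. nat \<bar>d\<bar>) B" by (auto simp: B_def inj_on_def)
  have "(\<Sum>d\<in>A. (1/2::real)^nat \<bar>d\<bar>) = (\<Sum>k\<in>(\<lambda>d. nat \<bar>d\<bar>) ` A. (1/2::real)^k)"
    by (simp add: sum.reindex[OF injA])
  also have "\<dots> \<le> 2" using fA by (intro geo_fin) auto
  finally have a: "(\<Sum>d\<in>A. (1/2::real)^nat \<bar>d\<bar>) \<le> 2" .
  have "(\<Sum>d\<in>B. (1/2::real)^nat \<bar>d\<bar>) = (\<Sum>k\<in>(\<lambda>d. nat \<bar>d\<bar>) ` B. (1/2::real)^k)"
    by (simp add: sum.reindex[OF injB])
  also have "\<dots> \<le> 2" using fA by (intro geo_fin) auto
  finally have b: "(\<Sum>d\<in>B. (1/2::real)^nat \<bar>d\<bar>) \<le> 2" .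
  have "(\<Sum>d\<in>D. (1/2::real)^nat \<bar>d\<bar>) = (\<Sum>d\<in>A. (1/2::real)^nat \<bar>d\<bar>) + (\<Sum>d\<in>B. (1/2::real)^nat \<bar>d\<bar>)"
    unfolding DAB(1) using fA DAB(2) by (rule sum.union_disjoint)
  then show ?thesis using a b by linarith
qed

lemma gauss_term:
  fixes t :: real and n :: int
  shows "exp (-((t - of_int n * ln 2)^2)) \<le> 2 * exp (1/4) * (1/2)^nat \<bar>n - \<lfloor>t / ln 2\<rfloor>\<bar>"
proof -
  define c :: real where "c = ln 2"
  have c: "0 < c" by (simp add: c_def)
  define m where "m = \<lfloor>t / c\<rfloor>"
  define d where "d = n - m"
  have m1: "of_int m * c \<le> t"
  proof -
    have "of_int m \<le> t / c" unfolding m_def by (rule of_int_floor_le)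
    then show ?thesis using c by (simp add: pos_le_divide_eq)
  qed
  have m2: "t < of_int m * c + c"
  proof -
    have "t / c < of_int m + 1" unfolding m_def by linarith
    then show ?thesis using c by (simp add: divide_less_eq algebra_simps)
  qed
  define u where "u = t - of_int n * c"
  have nd: "of_int n * c = of_int m * c + of_int d * c" by (simp add: d_def algebra_simps)
  have u1: "c * of_int \<bar>d\<bar> - c \<le> \<bar>u\<bar>"
  proof (cases "0 \<le> d")
    case True
    then have "\<bar>d\<bar> = d" by simp
    then show ?thesis using m2 nd unfolding u_def by (simp add: mult.commute)
  next
    case False
    then have "of_int \<bar>d\<bar> * c = - (of_int d * c)" by simp
    then show ?thesis using m1 nd c unfolding u_def by (simp add: mult.commute) 
  qed
  have u2: "\<bar>u\<bar> - 1/4 \<le> u^2"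
  proof -
    have "0 \<le> (\<bar>u\<bar> - 1/2)^2" by simp
    then show ?thesis by (simp add: power2_eq_square algebra_simps)
  qed
  have "exp (-(u^2)) \<le> exp (1/4 + c - c * of_int \<bar>d\<bar>)" using u1 u2 by simp
  also have "\<dots> = exp (1/4) * exp c * exp (of_nat (nat \<bar>d\<bar>) * (-c))"
    by (simp add: exp_add[symmetric] exp_diff algebra_simps)
  also have "\<dots> = 2 * exp (1/4) * (1/2)^nat \<bar>d\<bar>"
    unfolding exp_of_nat_mult by (simp add: c_def exp_minus inverse_eq_divide)
  finally show ?thesis by (simp add: u_def d_def m_def c_def)
qed

lemma gauss_sum:
  fixes t :: real assumes "finite N"
  shows "(\<Sum>n\<in>N. exp (-((t - of_int n * ln 2)^2))) \<le> 8 * exp (1/4)"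
proof -
  define m where "m = \<lfloor>t / ln 2\<rfloor>"
  have "(\<Sum>n\<in>N. exp (-((t - of_int n * ln 2)^2))) \<le> (\<Sum>n\<in>N. 2 * exp (1/4) * (1/2::real)^nat \<bar>n - m\<bar>)"
    unfolding m_def by (intro sum_mono gauss_term)
  also have "\<dots> = 2 * exp (1/4) * (\<Sum>n\<in>N. (1/2::real)^nat \<bar>n - m\<bar>)"
    by (simp add: sum_distrib_left)
  also have "(\<Sum>n\<in>N. (1/2::real)^nat \<bar>n - m\<bar>) = (\<Sum>d\<in>(\<lambda>n. n - m) ` N. (1/2::real)^nat \<bar>d\<bar>)"
    by (simp add: sum.reindex inj_on_def)
  also have "\<dots> \<le> 4" using assms by (intro geo_int) auto
  finally show ?thesis by simp
qed

lemma exp_Complex: "exp (Complex t y) = cis y * of_real (exp t)"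
proof -
  have "Complex t y = of_real t + \<i> * of_real y" by (simp add: complex_eq_iff)
  then show ?thesis by (simp add: exp_add exp_of_real cis_conv_exp mult.commute)
qed

lemma exp_in_sector:
  assumes "\<theta> < pi" "\<bar>Im s\<bar> < \<theta>" shows "exp s \<in> sector \<theta>"
  using assms Arg_exp[of s] unfolding sector_def by auto

lemma core:
  fixes g :: "complex \<Rightarrow> complex" and P :: "real \<Rightarrow> real" and x :: real
  assumes th: "\<theta> < pi" and eta: "0 < \<eta>" "\<eta> < \<theta>"
    and gd: "\<And>z. z \<in> sector \<theta> \<Longrightarrow> g field_differentiable (at z)"
    and gb: "\<And>z. z \<in> sector \<theta> \<Longrightarrow> norm (g z) \<le> B"
    and Pk: "(\<lambda>t. P t * exp (-((t-x)^2))) integrable_on UNIV"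
    and Pp: "\<And>t. (norm (g (cis \<eta> * of_real (exp t))))^2 \<le> P t"
    and Pm: "\<And>t. (norm (g (cis (-\<eta>) * of_real (exp t))))^2 \<le> P t"
  shows "2*pi*(norm (g (of_real (exp x))))^2
          \<le> 2*(exp(\<eta>^2)/\<eta>) * integral UNIV (\<lambda>t. P t * exp (-((t-x)^2)))"
proof -
  define T where "T = {s. Im s < \<theta>} \<inter> {s. -\<theta> < Im s}"
  have Tconv: "convex T" unfolding T_def
    by (intro convex_Int convex_halfspace_Im_lt convex_halfspace_Im_gt)
  have Topen: "open T" unfolding T_def
    by (intro open_Int open_halfspace_Im_lt open_halfspace_Im_gt)
  have Tsec: "exp s \<in> sector \<theta>" if "s \<in> T" for s
    using that th by (intro exp_in_sector) (auto simp: T_def)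
  define K where "K = exp(\<eta>^2)/\<eta>"
  define \<phi> where "\<phi> = (\<lambda>t. K * (P t * exp (-((t-x)^2))))"
  define I where "I = integral UNIV (\<lambda>t. P t * exp (-((t-x)^2)))"
  have Pnn: "0 \<le> P t" for t using Pp[of t] by (meson order_trans zero_le_power2)
  have phi_int: "\<phi> integrable_on UNIV" unfolding \<phi>_def using integrable_cmul[OF Pk, of K] by simp
  have phi_nn: "0 \<le> \<phi> t" for t unfolding \<phi>_def K_def using Pnn eta by auto
  have phi_I: "integral UNIV \<phi> = K * I" unfolding \<phi>_def I_def by simp
  have phi_sub: "integral {p..q} \<phi> \<le> K * I" for p q
    using integral_subset_le[of "{p..q}" UNIV \<phi>] integrable_on_subinterval[OF phi_int] phi_int phi_nn phi_I
    by auto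
  define \<Phi> where "\<Phi> = (\<lambda>s. (g (exp s))^2 * exp (-((s - of_real x)^2)))"
  have ge: "(\<lambda>s. g (exp s)) holomorphic_on T"
    unfolding holomorphic_on_def
  proof
    fix s assume "s \<in> T"
    have "(g \<circ> exp) field_differentiable at s"
      by (rule field_differentiable_compose) (auto intro: gd Tsec[OF \<open>s\<in>T\<close>] field_differentiable_within_exp)
    then show "(\<lambda>s. g (exp s)) field_differentiable at s within T"
      by (simp add: o_def field_differentiable_at_within)
  qed
  have Phol: "\<Phi> holomorphic_on T" unfolding \<Phi>_def
    by (intro holomorphic_intros ge)
  define F where "F = (\<lambda>w. \<Phi> w / (w - of_real x))"
  have Fcont: "continuous_on (T - {of_real x}) F" unfolding F_def
    by (intro continuous_intros continuous_on_subset[OF holomorphic_on_imp_continuous_on[OF Phol]]) auto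
  define B2 where "B2 = B^2 * exp(\<eta>^2)"
  have main: "2*pi*(norm (g (of_real (exp x))))^2 \<le> 2*K*I + 2*\<eta>*B2/R + 2*\<eta>*B2/R" if R: "R > 0" for R
  proof -
    define a1 where "a1 = Complex (x-R) (-\<eta>)"
    define a2 where "a2 = Complex (x+R) (-\<eta>)"
    define a3 where "a3 = Complex (x+R) \<eta>"
    define a4 where "a4 = Complex (x-R) \<eta>"
    have rp: "rectpath a1 a3 = linepath a1 a2 +++ linepath a2 a3 +++ linepath a3 a4 +++ linepath a4 a1"
      by (simp add: rectpath_def Let_def a1_def a2_def a3_def a4_def)
    have pim: "path_image (rectpath a1 a3) = closed_segment a1 a2 \<union> closed_segment a2 a3 \<union> closed_segment a3 a4 \<union> closed_segment a4 a1"
      unfolding rp by (simp add: path_image_join Un_assoc)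
    have pim2: "path_image (rectpath a1 a3) \<subseteq> T - {of_real x}"
    proof -
      have "path_image (rectpath a1 a3) = {z. Re z \<in> {Re a1, Re a3} \<and> Im z \<in> {Im a1..Im a3}} \<union>
           {z. Im z \<in> {Im a1, Im a3} \<and> Re z \<in> {Re a1..Re a3}}"
        using R eta by (intro path_image_rectpath) (auto simp: a1_def a3_def)
      then show ?thesis using R eta unfolding T_def a1_def a3_def by auto
    qed
    have xin: "of_real x \<in> box a1 a3" using R eta by (auto simp: in_box_complex_iff a1_def a3_def)
    have xT: "of_real x \<in> T" using eta unfolding T_def by auto
    have cauchy: "(F has_contour_integral (2*pi*\<i>*winding_number (rectpath a1 a3) (of_real x) * \<Phi> (of_real x))) (rectpath a1 a3)"
      unfolding F_def
      by (rule Cauchy_integral_formula_convex_simple[OF Tconv Phol])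
         (use pim2 xin xT in \<open>auto simp: interior_open[OF Topen]\<close>)
    then have cauchy': "(F has_contour_integral (2*pi*\<i>* \<Phi> (of_real x))) (rectpath a1 a3)"
      using winding_number_rectpath[OF xin] by simp
    have segc: "continuous_on (closed_segment a b) F" if "closed_segment a b \<subseteq> path_image (rectpath a1 a3)" for a b
      using continuous_on_subset[OF Fcont] that pim2 by blast
    have hc: "(F has_contour_integral contour_integral (linepath a b) F) (linepath a b)"
      if "closed_segment a b \<subseteq> path_image (rectpath a1 a3)" for a b
      by (intro has_contour_integral_integral contour_integrable_continuous_linepath segc that)
    note hs = hc[of a1 a2] hc[of a2 a3] hc[of a3 a4] hc[of a4 a1]
    have hs': "(F has_contour_integral (contour_integral (linepath a1 a2) F + (contour_integral (linepath a2 a3) F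
        + (contour_integral (linepath a3 a4) F + contour_integral (linepath a4 a1) F)))) (rectpath a1 a3)"
      unfolding rp using hs pim
      by (intro has_contour_integral_join valid_path_join) auto
    have eq: "2*pi*\<i>* \<Phi> (of_real x) = contour_integral (linepath a1 a2) F + (contour_integral (linepath a2 a3) F
        + (contour_integral (linepath a3 a4) F + contour_integral (linepath a4 a1) F))"
      using has_contour_integral_unique[OF cauchy' hs'] .
    have nPhi: "norm (\<Phi> (of_real x)) = (norm (g (of_real (exp x))))^2"
      unfolding \<Phi>_def by (simp add: exp_of_real norm_power)
    have b1: "norm (contour_integral (linepath a1 a2) F) \<le> K * I"
    proof -
      have "norm (contour_integral (linepath a1 a2) F) \<le> integral {x-R..x+R} \<phi>"
        unfolding a1_def a2_def
      proof (rule horiz)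
        show "x - R < x + R" using R by simp
        show "continuous_on (closed_segment (Complex (x - R) (- \<eta>)) (Complex (x + R) (- \<eta>))) F"
          using segc[of a1 a2] pim by (auto simp: a1_def a2_def)
        show "\<phi> integrable_on {x - R..x + R}" using integrable_on_subinterval[OF phi_int] by auto
        fix t assume t: "t \<in> {x - R..x + R}"
        show "norm (F (Complex t (- \<eta>))) \<le> \<phi> t"
          unfolding F_def \<Phi>_def exp_Complex \<phi>_def K_def
          by (rule hbound) (use eta Pm[of t] in auto)
      qed
      then show ?thesis using phi_sub by (meson order_trans)
    qed
    have b3: "norm (contour_integral (linepath a3 a4) F) \<le> K * I"
    proof -
      have "contour_integral (linepath a3 a4) F = - contour_integral (linepath a4 a3) F"
        using contour_integral_reversepath[of "linepath a4 a3" F] by simp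
      then have "norm (contour_integral (linepath a3 a4) F) = norm (contour_integral (linepath a4 a3) F)"
        by simp
      also have "\<dots> \<le> integral {x-R..x+R} \<phi>"
        unfolding a4_def a3_def
      proof (rule horiz)
        show "x - R < x + R" using R by simp
        show "continuous_on (closed_segment (Complex (x - R) \<eta>) (Complex (x + R) \<eta>)) F"
          using segc[of a3 a4] pim by (auto simp: a3_def a4_def closed_segment_commute)
        show "\<phi> integrable_on {x - R..x + R}" using integrable_on_subinterval[OF phi_int] by auto
        fix t assume t: "t \<in> {x - R..x + R}"
        show "norm (F (Complex t \<eta>)) \<le> \<phi> t"
          unfolding F_def \<Phi>_def exp_Complex \<phi>_def K_def
          by (rule hbound) (use eta Pp[of t] in auto)
      qed
      finally show ?thesis using phi_sub by (meson order_trans)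
    qed
    have vb: "norm (F w) \<le> B2 / R" if "w \<in> path_image (rectpath a1 a3)" "\<bar>Re w - x\<bar> = R" for w
    proof -
      have wT: "w \<in> T" using that pim2 by auto
      have "\<bar>Im w\<bar> \<le> \<eta>" using wT that(1) pim2
        using path_image_rectpath[of a1 a3] R eta by (auto simp: a1_def a3_def)
      then show ?thesis
        unfolding F_def \<Phi>_def B2_def
        by (intro vbound) (use that R gb[OF Tsec[OF wT]] in auto)
    qed
    have b2: "norm (contour_integral (linepath a2 a3) F) \<le> B2 / R * (2*\<eta>)"
    proof -
      have "norm (contour_integral (linepath a2 a3) F) \<le> B2 / R * norm (a3 - a2)"
      proof (rule contour_integral_bound_linepath)
        show "F contour_integrable_on linepath a2 a3" using hs(2) pim by (auto intro: has_contour_integral_integrable)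
        show "0 \<le> B2 / R" using R by (simp add: B2_def)
        fix w assume w: "w \<in> closed_segment a2 a3"
        then have "Re w = x + R" by (simp add: closed_segment_same_Re a2_def a3_def)
        then show "norm (F w) \<le> B2 / R" using vb[of w] w pim R by auto
      qed
      also have "norm (a3 - a2) = 2*\<eta>" using eta by (simp add: a2_def a3_def cmod_def real_sqrt_mult)
      finally show ?thesis .
    qed
    have b4: "norm (contour_integral (linepath a4 a1) F) \<le> B2 / R * (2*\<eta>)"
    proof -
      have "norm (contour_integral (linepath a4 a1) F) \<le> B2 / R * norm (a1 - a4)"
      proof (rule contour_integral_bound_linepath)
        show "F contour_integrable_on linepath a4 a1" using hs(4) pim by (auto intro: has_contour_integral_integrable)
        show "0 \<le> B2 / R" using R by (simp add: B2_def)
        fix w assume w: "w \<in> closed_segment a4 a1"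
        then have "Re w = x - R" by (simp add: closed_segment_same_Re a4_def a1_def)
        then show "norm (F w) \<le> B2 / R" using vb[of w] w pim R by auto
      qed
      also have "norm (a1 - a4) = 2*\<eta>" using eta by (simp add: a1_def a4_def cmod_def real_sqrt_mult)
      finally show ?thesis .
    qed
    have "2*pi*(norm (g (of_real (exp x))))^2 = norm (2*pi*\<i>* \<Phi> (of_real x))"
      by (simp add: norm_mult nPhi)
    also have "\<dots> \<le> norm (contour_integral (linepath a1 a2) F) + (norm (contour_integral (linepath a2 a3) F)
        + (norm (contour_integral (linepath a3 a4) F) + norm (contour_integral (linepath a4 a1) F)))"
      unfolding eq by (intro order_trans[OF norm_triangle_ineq] add_mono order_refl)
    also have "\<dots> \<le> K*I + (B2 / R * (2*\<eta>) + (K*I + B2 / R * (2*\<eta>)))"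
      using b1 b2 b3 b4 by linarith
    finally show ?thesis by (simp add: algebra_simps)
  qed
  have B2nn: "0 \<le> B2" by (simp add: B2_def)
  have "2*pi*(norm (g (of_real (exp x))))^2 \<le> 2*K*I"
  proof (rule field_le_epsilon)
    fix e :: real assume e: "0 < e"
    define R where "R = (4*\<eta>*B2 + 1)/e"
    have "0 < 4*\<eta>*B2 + 1" using eta B2nn by (simp add: add_nonneg_pos)
    then have R: "R > 0" using e unfolding R_def by simp
    have "2*\<eta>*B2/R + 2*\<eta>*B2/R = 4*\<eta>*B2 * e/(4*\<eta>*B2 + 1)"
      using e eta B2nn by (simp add: R_def field_simps)
    also have "\<dots> \<le> e"
    proof -
      have p: "0 < 4*\<eta>*B2 + 1" using eta B2nn by (simp add: add_nonneg_pos)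
      have "4*\<eta>*B2 * e \<le> e * (4*\<eta>*B2 + 1)" using e by (simp add: algebra_simps)
      then show ?thesis using p by (simp add: divide_le_eq)
    qed
    finally show "2*pi*(norm (g (of_real (exp x))))^2 \<le> 2*K*I + e"
      using main[OF R] by linarith
  qed
  then show ?thesis by (simp add: K_def I_def)
qed

lemma sil: fixes h :: "real \<Rightarrow> real"
  shows "set_integrable lborel A h \<Longrightarrow> h absolutely_integrable_on A"
  unfolding set_integrable_def by (metis integrable_completion borel_measurable_integrable)

lemma cv:
  fixes h :: "real \<Rightarrow> real"
  assumes "set_integrable lborel {0<..} h"
  shows "(\<lambda>t. exp t * h (exp t)) absolutely_integrable_on UNIV"
proof -
  have r: "exp ` (UNIV::real set) = {0<..}"
  proof
    show "exp ` (UNIV::real set) \<subseteq> {0<..}" by auto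
    show "{0<..} \<subseteq> exp ` (UNIV::real set)"
    proof
      fix y :: real assume "y \<in> {0<..}"
      then have "y = exp (ln y)" by simp
      then show "y \<in> exp ` UNIV" by blast
    qed
  qed
  have "h absolutely_integrable_on exp ` UNIV" unfolding r using sil[OF assms] .
  then have "(\<lambda>x. \<bar>exp x\<bar> *\<^sub>R h (exp x)) absolutely_integrable_on UNIV"
    using absolutely_integrable_change_of_variables_real[of UNIV exp exp h]
    by (auto intro: DERIV_exp has_field_derivative_at_within simp: inj_on_def)
  then show ?thesis by simp
qed

theorem lemma3p5:
  fixes J :: "'a::{real_inner, complete_space} \<Rightarrow> 'a"
    and f :: "complex \<Rightarrow> 'a"
    and \<theta> \<eta> :: real
  assumes J: "complex_structure J"
    and theta: "0 < \<theta>" "\<theta> < pi"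
    and hol: "holomorphic_wrt J f (sector \<theta>)"
    and bdd: "bounded (f ` sector \<theta>)"
    and eta: "0 < \<eta>" "\<eta> < \<theta>"
    and L2p: "set_integrable lborel {0<..}
                (\<lambda>t::real. (norm (f (cis \<eta> * complex_of_real t)))\<^sup>2 / t)"
    and L2m: "set_integrable lborel {0<..}
                (\<lambda>t::real. (norm (f (cis (- \<eta>) * complex_of_real t)))\<^sup>2 / t)"
  shows "(\<lambda>n::int. (norm (f (complex_of_real (2 powr real_of_int n))))\<^sup>2) summable_on UNIV"
proof -
  obtain M where M: "\<And>z. z \<in> sector \<theta> \<Longrightarrow> norm (f z) \<le> M"
    using bdd unfolding bounded_iff by auto
  define H where "H = (\<lambda>t. (norm (f (cis \<eta> * of_real (exp t))))^2 + (norm (f (cis (-\<eta>) * of_real (exp t))))^2)"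
  have Hnn: "0 \<le> H t" for t unfolding H_def by simp
  have H1: "(\<lambda>t. (norm (f (cis \<eta> * of_real (exp t))))^2) absolutely_integrable_on UNIV"
    using cv[OF L2p] by simp
  have H2: "(\<lambda>t. (norm (f (cis (-\<eta>) * of_real (exp t))))^2) absolutely_integrable_on UNIV"
    using cv[OF L2m] by simp
  have Hai: "H absolutely_integrable_on UNIV"
    unfolding H_def using set_integral_add(1)[OF H1 H2] .
  have Hint: "H integrable_on UNIV" using Hai set_lebesgue_integral_eq_integral(1) by blast
  define k where "k = (\<lambda>x t. exp (-((t - x)^2)) :: real)"
  have Hk: "(\<lambda>t. H t * k x t) integrable_on UNIV" for x
  proof -
    have "(\<lambda>t. k x t * H t) absolutely_integrable_on UNIV"
    proof (rule absolutely_integrable_bounded_measurable_product_real)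
      show "k x \<in> borel_measurable (lebesgue_on UNIV)"
        unfolding k_def by (intro continuous_imp_measurable_on_sets_lebesgue continuous_intros) auto
      show "bounded (k x ` UNIV)" unfolding bounded_iff k_def
        by (intro exI[of _ 1]) auto
    qed (use Hai in auto)
    then show ?thesis using set_lebesgue_integral_eq_integral(1) by (simp add: mult.commute)
  qed
  define K where "K = exp(\<eta>^2)/\<eta>"
  have Kpos: "0 < K" using eta by (simp add: K_def)
  define C where "C = 4 * K / pi"
  have Cnn: "0 \<le> C" using Kpos by (simp add: C_def)
  have hn: "(norm (f (of_real (2 powr of_int n))))^2 \<le> C * integral UNIV (\<lambda>t. H t * k (of_int n * ln 2) t)"
    for n :: int
  proof -
    define x where "x = of_int n * ln (2::real)"
    have px: "2 powr of_int n = exp x" by (simp add: x_def powr_def mult.commute)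
    define y where "y = f (of_real (exp x))"
    have Inn: "0 \<le> integral UNIV (\<lambda>t. H t * k x t)"
      by (rule integral_nonneg[OF Hk]) (simp add: Hnn k_def)
    show ?thesis
    proof (cases "y = 0")
      case True
      then show ?thesis using Inn Cnn by (simp add: px y_def x_def[symmetric])
    next
      case False
      define v where "v = y /\<^sub>R norm y"
      have nv: "norm v = 1" using False by (simp add: v_def)
      define g where "g = (\<lambda>z. Complex (inner (f z) v) (- inner (J (f z)) v))"
      have gd: "g field_differentiable (at z)" if "z \<in> sector \<theta>" for z
      proof -
        have "\<exists>w. (f has_derivative (\<lambda>h. cscale J h w)) (at z)"
          using hol that unfolding holomorphic_wrt_def by (rule bspec)
        then obtain w where w: "(f has_derivative (\<lambda>h. cscale J h w)) (at z)" ..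
        have "(g has_field_derivative Complex (inner w v) (- inner (J w) v)) (at z)"
          unfolding g_def by (rule gv_deriv[OF J w])
        then show ?thesis unfolding field_differentiable_def by (rule exI)
      qed
      have gb: "norm (g z) \<le> 2 * norm (f z)" for z
        unfolding g_def by (rule gv_bound[OF J nv])
      have gb2: "(norm (g z))^2 \<le> 4 * (norm (f z))^2" for z
      proof -
        have "(norm (g z))^2 \<le> (2 * norm (f z))^2" using gb[of z] by (intro power_mono) auto
        then show ?thesis by (simp add: power_mult_distrib)
      qed
      have c: "2*pi*(norm (g (of_real (exp x))))^2
          \<le> 2*(exp(\<eta>^2)/\<eta>) * integral UNIV (\<lambda>t. (4 * H t) * exp (-((t-x)^2)))"
      proof (rule core[OF theta(2) eta])
        show "g field_differentiable at z" if "z \<in> sector \<theta>" for z using gd that .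
        show "norm (g z) \<le> 2 * M" if "z \<in> sector \<theta>" for z
          using gb[of z] M[OF that] by linarith
        show "(\<lambda>t. 4 * H t * exp (- (t - x)\<^sup>2)) integrable_on UNIV"
          using integrable_on_mult_right[OF Hk[of x], of 4] by (simp add: k_def mult.assoc)
        show "(norm (g (cis \<eta> * of_real (exp t))))^2 \<le> 4 * H t" for t
          using gb2[of "cis \<eta> * of_real (exp t)"] zero_le_power2[of "norm (f (cis (-\<eta>) * of_real (exp t)))"]
          unfolding H_def distrib_left by linarith
        show "(norm (g (cis (-\<eta>) * of_real (exp t))))^2 \<le> 4 * H t" for t
          using gb2[of "cis (-\<eta>) * of_real (exp t)"] zero_le_power2[of "norm (f (cis \<eta> * of_real (exp t)))"]
          unfolding H_def distrib_left by linarith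
      qed
      have gx: "g (of_real (exp x)) = of_real (norm y)"
        unfolding g_def v_def y_def using gv_at[OF J False[unfolded y_def]] by simp
      have "integral UNIV (\<lambda>t. (4 * H t) * exp (-((t-x)^2))) = 4 * integral UNIV (\<lambda>t. H t * k x t)"
        using integral_mult[OF Hk[of x], of 4] by (simp add: k_def mult.assoc)
      with c gx have "2*pi*(norm y)^2 \<le> 8 * K * integral UNIV (\<lambda>t. H t * k x t)"
        by (simp add: K_def)
      then have "(norm y)^2 \<le> C * integral UNIV (\<lambda>t. H t * k x t)"
        by (simp add: C_def field_simps)
      then show ?thesis by (simp add: px y_def x_def)
    qed
  qed
  define L where "L = 8 * exp (1/4::real)"
  show ?thesis
  proof (rule nonneg_bdd_above_summable_on)
    show "bdd_above (sum (\<lambda>n::int. (norm (f (complex_of_real (2 powr real_of_int n))))\<^sup>2) ` {F. F \<subseteq> UNIV \<and> finite F})"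
      unfolding bdd_above_def
    proof (intro exI[of _ "C * (L * integral UNIV H)"] ballI)
      fix s assume "s \<in> sum (\<lambda>n::int. (norm (f (complex_of_real (2 powr real_of_int n))))\<^sup>2) ` {F. F \<subseteq> UNIV \<and> finite F}"
      then obtain N where N: "finite N" and s: "s = (\<Sum>n\<in>N. (norm (f (complex_of_real (2 powr real_of_int n))))\<^sup>2)"
        by auto
      have "s \<le> (\<Sum>n\<in>N. C * integral UNIV (\<lambda>t. H t * k (of_int n * ln 2) t))"
        unfolding s by (intro sum_mono hn)
      also have "\<dots> = C * integral UNIV (\<lambda>t. \<Sum>n\<in>N. H t * k (of_int n * ln 2) t)"
        by (simp add: sum_distrib_left integral_sum[OF N Hk])
      also have "\<dots> \<le> C * integral UNIV (\<lambda>t. L * H t)"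
      proof (intro mult_left_mono Cnn integral_le)
        show "(\<lambda>t. \<Sum>n\<in>N. H t * k (of_int n * ln 2) t) integrable_on UNIV"
          by (intro integrable_sum N Hk)
        show "(\<lambda>t. L * H t) integrable_on UNIV" by (intro integrable_on_mult_right Hint)
        fix t
        have "(\<Sum>n\<in>N. H t * k (of_int n * ln 2) t) = H t * (\<Sum>n\<in>N. exp (-((t - of_int n * ln 2)^2)))"
          by (simp add: k_def sum_distrib_left)
        also have "\<dots> \<le> H t * L" unfolding L_def by (intro mult_left_mono gauss_sum N Hnn)
        finally show "(\<Sum>n\<in>N. H t * k (of_int n * ln 2) t) \<le> L * H t" by (simp add: mult.commute)
      qed
      also have "\<dots> = C * (L * integral UNIV H)"
        using integral_mult[OF Hint, of L] by simp
      finally show "s \<le> C * (L * integral UNIV H)" .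
    qed
  qed simp
qed

end
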